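(* Let $(M,c,\nabla)$ be a non-closed Lorentzian Weyl manifold of dimension $n+2\geq4$ with recurrent curvature tensor $R$, and let $U$ be a coordinate neighborhood with coordinates $v,x^1,\dots,x^n,u$ on which $c$ is represented by $g=2\,dv\,du+\sum_{i=1}^{n-1}(dx^i)^2+e^{-2F}(dx^n)^2+a(u)\sum_{i=1}^{n-1}(x^i)^2(du)^2$ with corresponding 1-form $\omega=\partial_uF\,du$, where $F=F(x^n,u)$ satisfies $\partial_u^2F-(\partial_uF)^2=-a(u)$ and $\partial_{x^n}\partial_uF$ is nowhere vanishing. Then the conformal class of $g$ on $U$ contains a metric $h$ satisfying $$\nabla h=-2\omega_h\otimes h,\qquad \nabla R=-3\omega_h\otimes R,$$ and such a metric is unique up to homothety.
   Context: A Lorentzian Weyl manifold is a triple $(M,c,\nabla)$ with $M$ a connected manifold, $c$ a conformal class of Lorentzian metrics, $\nabla$ a torsion-free connection with $\nabla g=-2\omega_g\otimes g$ for each $g\in c$ and some 1-form $\omega_g$. It is closed if $d\omega_g=0$. $R$ is recurrent if $\nabla R=\theta\otimes R$ for some 1-form $\theta$. Homothetic metrics differ by a positive constant factor. *)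

theory Defs
  imports "HOL-Analysis.Analysis"
begin

definition pdv :: "'a::euclidean_space \<Rightarrow> ('a \<Rightarrow> real) \<Rightarrow> 'a \<Rightarrow> real" where
  "pdv b f x = deriv (\<lambda>t. f (x + t *\<^sub>R b)) 0"

definition smooth_on :: "'a::euclidean_space set \<Rightarrow> ('a \<Rightarrow> real) \<Rightarrow> bool" where
  "smooth_on S f \<longleftrightarrow> open S \<and>
     (\<forall>bs. set bs \<subseteq> Basis \<longrightarrow>
        continuous_on S (foldr pdv bs f) \<and>
        (\<forall>b\<in>Basis. \<forall>x\<in>S. (\<lambda>t. foldr pdv bs f (x + t *\<^sub>R b)) differentiable (at 0)))"

definition cpd :: "'i::finite \<Rightarrow> (real^'i \<Rightarrow> real) \<Rightarrow> real^'i \<Rightarrow> real" where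
  "cpd k f = pdv (axis k 1) f"

text \<open>A connection is given by Christoffel symbols \<open>\<Gamma> k a b\<close> = Gamma^k_{ab},
  i.e. nabla_{d_a} d_b = sum_k Gamma^k_{ab} d_k.\<close>

definition nabla2 ::
  "('i::finite \<Rightarrow> 'i \<Rightarrow> 'i \<Rightarrow> real^'i \<Rightarrow> real) \<Rightarrow> ('i \<Rightarrow> 'i \<Rightarrow> real^'i \<Rightarrow> real)
     \<Rightarrow> 'i \<Rightarrow> 'i \<Rightarrow> 'i \<Rightarrow> real^'i \<Rightarrow> real" where
  "nabla2 \<Gamma> h a b c p =
     cpd a (h b c) p - (\<Sum>d\<in>UNIV. \<Gamma> d a b p * h d c p) - (\<Sum>d\<in>UNIV. \<Gamma> d a c p * h b d p)"

text \<open>Curvature tensor R^d_{cab} (components of R(d_a,d_b)d_c).\<close>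
definition curv ::
  "('i::finite \<Rightarrow> 'i \<Rightarrow> 'i \<Rightarrow> real^'i \<Rightarrow> real) \<Rightarrow> 'i \<Rightarrow> 'i \<Rightarrow> 'i \<Rightarrow> 'i \<Rightarrow> real^'i \<Rightarrow> real" where
  "curv \<Gamma> d c a b p =
     cpd a (\<Gamma> d b c) p - cpd b (\<Gamma> d a c) p
     + (\<Sum>e\<in>UNIV. \<Gamma> d a e p * \<Gamma> e b c p - \<Gamma> d b e p * \<Gamma> e a c p)"

definition nabla13 ::
  "('i::finite \<Rightarrow> 'i \<Rightarrow> 'i \<Rightarrow> real^'i \<Rightarrow> real) \<Rightarrow> ('i \<Rightarrow> 'i \<Rightarrow> 'i \<Rightarrow> 'i \<Rightarrow> real^'i \<Rightarrow> real)
     \<Rightarrow> 'i \<Rightarrow> 'i \<Rightarrow> 'i \<Rightarrow> 'i \<Rightarrow> 'i \<Rightarrow> real^'i \<Rightarrow> real" where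
  "nabla13 \<Gamma> T e d c a b p =
     cpd e (T d c a b) p
     + (\<Sum>f\<in>UNIV. \<Gamma> d e f p * T f c a b p)
     - (\<Sum>f\<in>UNIV. \<Gamma> f e c p * T d f a b p)
     - (\<Sum>f\<in>UNIV. \<Gamma> f e a p * T d c f b p)
     - (\<Sum>f\<in>UNIV. \<Gamma> f e b p * T d c a f p)"

definition weyl_connection ::
  "(real^'i::finite) set \<Rightarrow> ('i \<Rightarrow> 'i \<Rightarrow> real^'i \<Rightarrow> real) \<Rightarrow> ('i \<Rightarrow> real^'i \<Rightarrow> real)
     \<Rightarrow> ('i \<Rightarrow> 'i \<Rightarrow> 'i \<Rightarrow> real^'i \<Rightarrow> real) \<Rightarrow> bool" where
  "weyl_connection U g w \<Gamma> \<longleftrightarrow>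
     (\<forall>k a b. smooth_on U (\<Gamma> k a b)) \<and>
     (\<forall>k a b. \<forall>p\<in>U. \<Gamma> k a b p = \<Gamma> k b a p) \<and>
     (\<forall>a b c. \<forall>p\<in>U. nabla2 \<Gamma> g a b c p = - 2 * w a p * g b c p)"

definition conformal_on ::
  "(real^'i::finite) set \<Rightarrow> ('i \<Rightarrow> 'i \<Rightarrow> real^'i \<Rightarrow> real) \<Rightarrow> ('i \<Rightarrow> 'i \<Rightarrow> real^'i \<Rightarrow> real) \<Rightarrow> bool" where
  "conformal_on U g h \<longleftrightarrow>
     (\<exists>\<phi>. smooth_on U \<phi> \<and> (\<forall>p\<in>U. \<phi> p > 0) \<and> (\<forall>i j. \<forall>p\<in>U. h i j p = \<phi> p * g i j p))"

text \<open>Coordinates: index iv is v, iu is u, ixn is x^n; the remaining indices are x^1..x^{n-1}.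
  F is a function of (x^n, u).\<close>
definition ppw_metric ::
  "'i \<Rightarrow> 'i \<Rightarrow> 'i \<Rightarrow> (real \<times> real \<Rightarrow> real) \<Rightarrow> (real \<Rightarrow> real)
     \<Rightarrow> 'i::finite \<Rightarrow> 'i \<Rightarrow> real^'i \<Rightarrow> real" where
  "ppw_metric iv iu ixn F a i j p =
     (if (i = iv \<and> j = iu) \<or> (i = iu \<and> j = iv) then 1
      else if i = j \<and> i \<notin> {iv, iu, ixn} then 1
      else if i = ixn \<and> j = ixn then exp (- 2 * F (p $ ixn, p $ iu))
      else if i = iu \<and> j = iu then a (p $ iu) * (\<Sum>k\<in>UNIV - {iv, iu, ixn}. (p $ k)^2)
      else 0)"

definition ppw_form ::
  "'i \<Rightarrow> 'i \<Rightarrow> (real \<times> real \<Rightarrow> real) \<Rightarrow> 'i::finite \<Rightarrow> real^'i \<Rightarrow> real" where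
  "ppw_form iu ixn F k p = (if k = iu then pdv (0, 1) F (p $ ixn, p $ iu) else 0)"

end

theory Submission
  imports Defs
begin
lemma ev_line:
  fixes x b :: "'a::real_normed_vector"
  assumes "open S" "x \<in> S"
  shows "\<forall>\<^sub>F t in nhds (0::real). x + t *\<^sub>R b \<in> S"
proof -
  have "isCont (\<lambda>t::real. x + t *\<^sub>R b) 0" by (intro continuous_intros)
  hence "((\<lambda>t::real. x + t *\<^sub>R b) \<longlongrightarrow> x) (nhds 0)"
    by (simp add: isCont_def tendsto_nhds_iff) 
  then show ?thesis using assms by (metis topological_tendstoD)
qed

lemma pdv_local:
  assumes "open S" "x \<in> S" "\<forall>y\<in>S. f y = g y"
  shows "pdv b f x = pdv b g x"
  unfolding pdv_def
  apply (rule deriv_cong_ev[OF _ refl])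
  using ev_line[OF assms(1,2), of b] assms(3) by (auto elim: eventually_mono)

lemma pdv_has:
  "((\<lambda>t. f (x + t *\<^sub>R b)) has_real_derivative D) (at 0) \<Longrightarrow> pdv b f x = D"
  unfolding pdv_def by (rule DERIV_imp_deriv)

lemma pdv_diff:
  "(\<lambda>t. f (x + t *\<^sub>R b)) differentiable (at 0) \<Longrightarrow>
     ((\<lambda>t. f (x + t *\<^sub>R b)) has_real_derivative pdv b f x) (at 0)"
  unfolding pdv_def using DERIV_deriv_iff_real_differentiable by blast

lemma diff_local:
  fixes f g :: "'a::real_normed_vector \<Rightarrow> real"
  assumes "open S" "x \<in> S" "\<forall>y\<in>S. f y = g y"
    and "(\<lambda>t. f (x + t *\<^sub>R b)) differentiable (at (0::real))"
  shows "(\<lambda>t. g (x + t *\<^sub>R b)) differentiable (at 0)"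
proof -
  obtain D where D: "((\<lambda>t. f (x + t *\<^sub>R b)) has_real_derivative D) (at 0)"
    using assms(4) real_differentiable_def by blast
  have ev: "\<forall>\<^sub>F t in nhds 0. f (x + t *\<^sub>R b) = g (x + t *\<^sub>R b)"
    using ev_line[OF assms(1,2), of b] assms(3) by (auto elim: eventually_mono)
  have "((\<lambda>t. g (x + t *\<^sub>R b)) has_real_derivative D) (at 0)"
    using DERIV_cong_ev[OF refl ev refl] D by simp
  thus ?thesis using real_differentiable_def by blast
qed

lemma has_local:
  fixes f g :: "'a::real_normed_vector \<Rightarrow> real"
  assumes "open S" "x \<in> S" "\<forall>y\<in>S. f y = g y"
    and "((\<lambda>t. f (x + t *\<^sub>R b)) has_real_derivative D) (at (0::real))"
  shows "((\<lambda>t. g (x + t *\<^sub>R b)) has_real_derivative D) (at 0)"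
proof -
  have ev: "\<forall>\<^sub>F t in nhds 0. f (x + t *\<^sub>R b) = g (x + t *\<^sub>R b)"
    using ev_line[OF assms(1,2), of b] assms(3) by (auto elim: eventually_mono)
  show ?thesis
    using DERIV_cong_ev[OF refl ev refl] assms(4) by simp
qed

definition dn :: "nat \<Rightarrow> 'a::euclidean_space set \<Rightarrow> ('a \<Rightarrow> real) \<Rightarrow> bool" where
  "dn n S f \<longleftrightarrow> (\<forall>bs. set bs \<subseteq> Basis \<and> length bs \<le> n \<longrightarrow>
        continuous_on S (foldr pdv bs f) \<and>
        (\<forall>b\<in>Basis. \<forall>x\<in>S. (\<lambda>t. foldr pdv bs f (x + t *\<^sub>R b)) differentiable (at 0)))"

lemma dn0: "dn 0 S f \<longleftrightarrow> continuous_on S f \<and>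
   (\<forall>b\<in>Basis. \<forall>x\<in>S. (\<lambda>t. f (x + t *\<^sub>R b)) differentiable (at 0))"
  unfolding dn_def by auto

lemma dn_Suc: "dn (Suc n) S f \<longleftrightarrow> dn 0 S f \<and> (\<forall>b\<in>Basis. dn n S (pdv b f))"
proof
  assume A: "dn (Suc n) S f"
  show "dn 0 S f \<and> (\<forall>b\<in>Basis. dn n S (pdv b f))"
  proof
    show "dn 0 S f" using spec[OF A[unfolded dn_def], of "[]"] unfolding dn0 by simp
    show "\<forall>b\<in>Basis. dn n S (pdv b f)"
    proof (intro ballI)
      fix b :: 'a assume b: "b \<in> Basis"
      show "dn n S (pdv b f)" unfolding dn_def
      proof (intro allI impI)
        fix bs :: "'a list" assume "set bs \<subseteq> Basis \<and> length bs \<le> n"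
        hence "set (bs @ [b]) \<subseteq> Basis \<and> length (bs @ [b]) \<le> Suc n" using b by auto
        hence "continuous_on S (foldr pdv (bs @ [b]) f) \<and>
          (\<forall>ba\<in>Basis. \<forall>x\<in>S. (\<lambda>t. foldr pdv (bs @ [b]) f (x + t *\<^sub>R ba)) differentiable at 0)"
          using A unfolding dn_def by blast
        thus "continuous_on S (foldr pdv bs (pdv b f)) \<and>
          (\<forall>ba\<in>Basis. \<forall>x\<in>S. (\<lambda>t. foldr pdv bs (pdv b f) (x + t *\<^sub>R ba)) differentiable at 0)"
          by simp
      qed
    qed
  qed
next
  assume A: "dn 0 S f \<and> (\<forall>b\<in>Basis. dn n S (pdv b f))"
  show "dn (Suc n) S f" unfolding dn_def
  proof (intro allI impI)
    fix bs :: "'a list" assume bs: "set bs \<subseteq> Basis \<and> length bs \<le> Suc n"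
    show "continuous_on S (foldr pdv bs f) \<and>
        (\<forall>b\<in>Basis. \<forall>x\<in>S. (\<lambda>t. foldr pdv bs f (x + t *\<^sub>R b)) differentiable (at 0))"
    proof (cases bs rule: rev_exhaust)
      case Nil thus ?thesis using A unfolding dn_def by auto
    next
      case (snoc ys y)
      hence "y \<in> Basis" "set ys \<subseteq> Basis \<and> length ys \<le> n" using bs by auto
      hence "dn n S (pdv y f)" using A by auto
      with \<open>set ys \<subseteq> Basis \<and> length ys \<le> n\<close> show ?thesis
        unfolding dn_def snoc by simp
    qed
  qed
qed

lemma smooth_dn: "smooth_on S f \<longleftrightarrow> open S \<and> (\<forall>n. dn n S f)"
  unfolding smooth_on_def dn_def by blast

lemma dn_mono: "dn n S f \<Longrightarrow> m \<le> n \<Longrightarrow> dn m S f"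
  unfolding dn_def by auto

lemma dn_cong: "open S \<Longrightarrow> \<forall>x\<in>S. f x = g x \<Longrightarrow> dn n S f \<Longrightarrow> dn n S g"
proof (induction n arbitrary: f g)
  case 0
  then show ?case unfolding dn0
    using continuous_on_cong[of S S f g] diff_local[of S _ f g] by auto
next
  case (Suc n)
  have "dn 0 S g" using Suc.prems unfolding dn_Suc dn0
    using continuous_on_cong[of S S f g] diff_local[of S _ f g] by auto
  moreover have "\<forall>b\<in>Basis. dn n S (pdv b g)"
  proof
    fix b :: 'a assume b: "b \<in> Basis"
    have "dn n S (pdv b f)" using Suc.prems b unfolding dn_Suc by auto
    moreover have "\<forall>x\<in>S. pdv b f x = pdv b g x"
      using pdv_local[OF Suc.prems(1) _ Suc.prems(2)] by blast
    ultimately show "dn n S (pdv b g)" using Suc.IH[OF Suc.prems(1)] by blast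
  qed
  ultimately show ?case unfolding dn_Suc by blast
qed

lemma pdv_const: "pdv b (\<lambda>x. c) = (\<lambda>x. 0)"
  unfolding pdv_def by (intro ext DERIV_imp_deriv) simp

lemma dn_const: "dn n S (\<lambda>x. c)"
proof (induction n arbitrary: c)
  case 0 thus ?case unfolding dn0 by simp
next
  case (Suc n) thus ?case unfolding dn_Suc pdv_const dn0 by simp
qed

lemma dn_add: "open S \<Longrightarrow> dn n S f \<Longrightarrow> dn n S g \<Longrightarrow> dn n S (\<lambda>x. f x + g x)"
proof (induction n arbitrary: f g)
  case 0
  then show ?case unfolding dn0
    by (auto intro!: continuous_on_add differentiable_add)
next
  case (Suc n)
  have "dn 0 S (\<lambda>x. f x + g x)" using Suc.prems unfolding dn_Suc dn0
    by (auto intro!: continuous_on_add differentiable_add)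
  moreover have "\<forall>b\<in>Basis. dn n S (pdv b (\<lambda>x. f x + g x))"
  proof
    fix b :: 'a assume b: "b \<in> Basis"
    have "\<forall>x\<in>S. pdv b f x + pdv b g x = pdv b (\<lambda>x. f x + g x) x"
    proof
      fix x assume x: "x \<in> S"
      have "((\<lambda>t. f (x + t *\<^sub>R b) + g (x + t *\<^sub>R b)) has_real_derivative pdv b f x + pdv b g x) (at 0)"
        using Suc.prems b x unfolding dn_Suc dn0 by (intro DERIV_add pdv_diff) auto
      thus "pdv b f x + pdv b g x = pdv b (\<lambda>x. f x + g x) x" by (simp add: pdv_has)
    qed
    moreover have "dn n S (\<lambda>x. pdv b f x + pdv b g x)"
      using Suc.prems b unfolding dn_Suc by (auto intro!: Suc.IH[OF Suc.prems(1)])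
    ultimately show "dn n S (pdv b (\<lambda>x. f x + g x))" by (rule dn_cong[OF Suc.prems(1)])
  qed
  ultimately show ?case unfolding dn_Suc by blast
qed

lemma dn_mult: "open S \<Longrightarrow> dn n S f \<Longrightarrow> dn n S g \<Longrightarrow> dn n S (\<lambda>x. f x * g x)"
proof (induction n arbitrary: f g)
  case 0
  then show ?case unfolding dn0
    by (auto intro!: continuous_on_mult differentiable_mult)
next
  case (Suc n)
  have "dn 0 S (\<lambda>x. f x * g x)" using Suc.prems unfolding dn_Suc dn0
    by (auto intro!: continuous_on_mult differentiable_mult)
  moreover have "\<forall>b\<in>Basis. dn n S (pdv b (\<lambda>x. f x * g x))"
  proof
    fix b :: 'a assume b: "b \<in> Basis"
    have "\<forall>x\<in>S. pdv b f x * g x + f x * pdv b g x = pdv b (\<lambda>x. f x * g x) x"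
    proof
      fix x assume x: "x \<in> S"
      have "((\<lambda>t. f (x + t *\<^sub>R b) * g (x + t *\<^sub>R b)) has_real_derivative
             pdv b f x * g (x + 0 *\<^sub>R b) + pdv b g x * f (x + 0 *\<^sub>R b)) (at 0)"
        using Suc.prems b x unfolding dn_Suc dn0 by (intro DERIV_mult pdv_diff) auto
      thus "pdv b f x * g x + f x * pdv b g x = pdv b (\<lambda>x. f x * g x) x"
        by (simp add: pdv_has mult.commute)
    qed
    moreover have "dn n S (\<lambda>x. pdv b f x * g x + f x * pdv b g x)"
    proof -
      have "dn n S f" using Suc.prems(2) by (rule dn_mono) simp
      moreover have "dn n S g" using Suc.prems(3) by (rule dn_mono) simp
      moreover have "dn n S (pdv b f)" "dn n S (pdv b g)" using Suc.prems b unfolding dn_Suc by auto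
      ultimately show ?thesis using Suc.prems(1) by (auto intro!: dn_add Suc.IH[OF Suc.prems(1)])
    qed
    ultimately show "dn n S (pdv b (\<lambda>x. f x * g x))" by (rule dn_cong[OF Suc.prems(1)])
  qed
  ultimately show ?case unfolding dn_Suc by blast
qed

lemma pdv_chain1:
  assumes "(\<lambda>t. s (x + t *\<^sub>R b)) differentiable (at 0)" "DERIV g (s x) :> D"
  shows "((\<lambda>t. g (s (x + t *\<^sub>R b))) has_real_derivative D * pdv b s x) (at 0)"
proof -
  have "DERIV g (s (x + 0 *\<^sub>R b)) :> D" using assms(2) by simp
  from DERIV_chain2[OF this pdv_diff[OF assms(1)]] show ?thesis .
qed

lemma dn_comp1:
  fixes gs :: "nat \<Rightarrow> real \<Rightarrow> real"
  assumes S: "open S" and T: "open T"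
    and gs: "\<forall>k. \<forall>y\<in>T. (gs k has_real_derivative gs (Suc k) y) (at y)"
    and sT: "\<forall>x\<in>S. s x \<in> T"
  shows "dn n S s \<Longrightarrow> dn n S (\<lambda>x. gs k (s x))"
proof (induction n arbitrary: k)
  have base: "dn 0 S (\<lambda>x. gs k (s x))" if "dn 0 S s" for k
  proof -
    have cg: "continuous_on T (gs k)"
      using gs by (intro continuous_at_imp_continuous_on) (auto intro: DERIV_isCont)
    have "continuous_on S (\<lambda>x. gs k (s x))"
      using continuous_on_compose2[OF cg, of S s] that sT unfolding dn0 by auto
    moreover have "(\<lambda>t. gs k (s (x + t *\<^sub>R b))) differentiable (at 0)" if "b \<in> Basis" "x \<in> S" for b x
      using pdv_chain1[of s x b "gs k" "gs (Suc k) (s x)"] gs sT \<open>dn 0 S s\<close> that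
      unfolding dn0 real_differentiable_def by blast
    ultimately show ?thesis unfolding dn0 by blast
  qed
  { case 0 thus ?case using base by blast }
  { case (Suc n)
    have "dn 0 S (\<lambda>x. gs k (s x))" using base Suc.prems unfolding dn_Suc by blast
    moreover have "\<forall>b\<in>Basis. dn n S (pdv b (\<lambda>x. gs k (s x)))"
    proof
      fix b :: 'a assume b: "b \<in> Basis"
      have "\<forall>x\<in>S. gs (Suc k) (s x) * pdv b s x = pdv b (\<lambda>x. gs k (s x)) x"
      proof
        fix x assume x: "x \<in> S"
        have "((\<lambda>t. gs k (s (x + t *\<^sub>R b))) has_real_derivative gs (Suc k) (s x) * pdv b s x) (at 0)"
          using Suc.prems b x gs sT unfolding dn_Suc dn0 by (intro pdv_chain1) auto
        thus "gs (Suc k) (s x) * pdv b s x = pdv b (\<lambda>x. gs k (s x)) x" by (simp add: pdv_has)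
      qed
      moreover have "dn n S (\<lambda>x. gs (Suc k) (s x) * pdv b s x)"
      proof -
        have "dn n S s" using Suc.prems by (rule dn_mono) simp
        hence "dn n S (\<lambda>x. gs (Suc k) (s x))" by (rule Suc.IH)
        moreover have "dn n S (pdv b s)" using Suc.prems b unfolding dn_Suc by auto
        ultimately show ?thesis using S by (rule dn_mult[rotated])
      qed
      ultimately show "dn n S (pdv b (\<lambda>x. gs k (s x)))" by (rule dn_cong[OF S])
    qed
    ultimately show ?case unfolding dn_Suc by blast }
qed

lemma Basis_vecE: "(b::real^'i) \<in> Basis \<Longrightarrow> \<exists>k. b = axis k 1"
  by (auto simp: Basis_vec_def)

lemma axis_Basis: "(axis k 1 :: real^'i) \<in> Basis"
  by (auto simp: Basis_vec_def)

lemma pdv_zero: "pdv 0 G x = 0"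
  unfolding pdv_def by (intro DERIV_imp_deriv) simp

lemma line_proj: "(\<lambda>t. G ((q + t *\<^sub>R axis k 1)$i, (q + t *\<^sub>R axis k 1)$j)) =
   (\<lambda>t. G ((q$i, q$j) + t *\<^sub>R ((axis k 1 :: real^'i)$i, (axis k 1 :: real^'i)$j)))"
  by (simp add: algebra_simps)

lemma cpd_proj: "pdv (axis k 1) (\<lambda>q::real^'i. G (q$i, q$j)) q =
   pdv ((axis k 1 :: real^'i)$i, (axis k 1 :: real^'i)$j) G (q$i, q$j)"
  unfolding pdv_def line_proj ..

lemma pi_axis: "i \<noteq> j \<Longrightarrow> ((axis k 1 :: real^'i)$i, (axis k 1 :: real^'i)$j) \<in> Basis \<or>
      ((axis k 1 :: real^'i)$i, (axis k 1 :: real^'i)$j) = 0"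
  by (auto simp: axis_def Basis_prod_def zero_prod_def)

lemma dn_proj0:
  fixes U :: "(real^'i) set"
  assumes "i \<noteq> j" "\<forall>q\<in>U. (q$i, q$j) \<in> W" "dn 0 W G"
  shows "dn 0 U (\<lambda>q. G (q$i, q$j))"
proof -
  have "continuous_on U (\<lambda>q. G (q$i, q$j))"
    using assms unfolding dn0
    by (intro continuous_on_compose2[of W G U "\<lambda>q. (q$i, q$j)"]) (auto intro!: continuous_intros)
  moreover have "(\<lambda>t. G ((q + t *\<^sub>R b)$i, (q + t *\<^sub>R b)$j)) differentiable (at 0)"
    if bq: "b \<in> Basis" "q \<in> U" for b q
  proof -
    obtain k where b: "b = axis k 1" using Basis_vecE[OF bq(1)] by blast
    let ?P = "((axis k 1 :: real^'i)$i, (axis k 1 :: real^'i)$j)"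
    have "(\<lambda>t. G ((q$i, q$j) + t *\<^sub>R ?P)) differentiable (at 0)"
    proof (cases "?P = 0")
      case True show ?thesis unfolding True by simp
    next
      case False
      hence "?P \<in> Basis" using pi_axis[OF assms(1), of k] by blast
      moreover have "(q$i, q$j) \<in> W" using assms bq by blast
      ultimately show ?thesis using assms(3) unfolding dn0 by blast
    qed
    thus ?thesis unfolding b line_proj .
  qed
  ultimately show ?thesis unfolding dn0 by blast
qed

lemma dn_proj:
  fixes U :: "(real^'i) set"
  assumes "i \<noteq> j" "\<forall>q\<in>U. (q$i, q$j) \<in> W"
  shows "dn n W G \<Longrightarrow> dn n U (\<lambda>q. G (q$i, q$j))"
proof (induction n arbitrary: G)
  case 0 thus ?case using dn_proj0[OF assms] by blast
next
  case (Suc n)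
  have "dn 0 U (\<lambda>q. G (q$i, q$j))" using dn_proj0[OF assms] Suc.prems unfolding dn_Suc by blast
  moreover have "\<forall>b\<in>Basis. dn n U (pdv b (\<lambda>q. G (q$i, q$j)))"
  proof
    fix b :: "real^'i" assume "b \<in> Basis"
    then obtain k where b: "b = axis k 1" using Basis_vecE by blast
    have e: "pdv b (\<lambda>q. G (q$i, q$j)) = (\<lambda>q. pdv ((axis k 1 :: real^'i)$i, (axis k 1 :: real^'i)$j) G (q$i, q$j))"
      unfolding b using cpd_proj by blast
    show "dn n U (pdv b (\<lambda>q. G (q$i, q$j)))"
    proof (cases "((axis k 1 :: real^'i)$i, (axis k 1 :: real^'i)$j) = 0")
      case True thus ?thesis unfolding e by (simp add: pdv_zero dn_const)
    next
      case False
      hence "((axis k 1 :: real^'i)$i, (axis k 1 :: real^'i)$j) \<in> Basis" using pi_axis[OF assms(1)] by blast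
      hence "dn n W (pdv ((axis k 1 :: real^'i)$i, (axis k 1 :: real^'i)$j) G)" using Suc.prems unfolding dn_Suc by blast
      thus ?thesis unfolding e by (rule Suc.IH)
    qed
  qed
  ultimately show ?case unfolding dn_Suc by blast
qed

lemma ball_segment:
  fixes x y :: "real^'i"
  assumes "y \<in> ball x r" "\<bar>t\<bar> \<le> \<bar>y$k - x$k\<bar>"
  shows "(\<chi> i. if i = k then x$i else y$i) + t *\<^sub>R axis k 1 \<in> ball x r"
proof -
  have "norm (x - ((\<chi> i. if i = k then x$i else y$i) + t *\<^sub>R axis k 1)) \<le> norm (x - y)"
    by (rule norm_le_componentwise_cart) (use assms(2) in \<open>auto simp: axis_def\<close>)
  thus ?thesis using assms(1) by (simp add: dist_norm)
qed

lemma local_const_box: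
  fixes \<psi> :: "real^'i \<Rightarrow> real"
  assumes sub: "ball x r \<subseteq> U"
    and D: "\<forall>z\<in>U. \<forall>k. ((\<lambda>t. \<psi> (z + t *\<^sub>R axis k 1)) has_real_derivative 0) (at 0)"
  shows "finite K \<Longrightarrow> \<forall>y. y \<in> ball x r \<and> (\<forall>k. k \<notin> K \<longrightarrow> y$k = x$k) \<longrightarrow> \<psi> y = \<psi> x"
proof (induction K rule: finite_induct)
  case empty
  have "y = x" if "\<forall>k. y$k = x$k" for y :: "real^'i" using that by (simp add: vec_eq_iff)
  then show ?case by auto
next
  case (insert k K)
  show ?case
  proof (intro allI impI)
    fix y assume y: "y \<in> ball x r \<and> (\<forall>i. i \<notin> insert k K \<longrightarrow> y$i = x$i)"
    define y' where "y' = (\<chi> i. if i = k then x$i else y$i)"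
    define d where "d = y$k - x$k"
    have y'b: "y' + t *\<^sub>R axis k 1 \<in> ball x r" if "\<bar>t\<bar> \<le> \<bar>d\<bar>" for t
      unfolding y'_def d_def using ball_segment[of y x r t k] y that d_def by auto
    have "y' \<in> ball x r" using y'b[of 0] by simp
    moreover have "\<forall>i. i \<notin> K \<longrightarrow> y'$i = x$i" using y unfolding y'_def by auto
    ultimately have e1: "\<psi> y' = \<psi> x" using insert.IH by blast
    define G where "G t = \<psi> (y' + t *\<^sub>R axis k 1)" for t
    have "\<exists>c. \<forall>t\<in>{-\<bar>d\<bar>..\<bar>d\<bar>}. G t = c"
    proof (rule has_field_derivative_zero_constant)
      show "convex {-\<bar>d\<bar>..\<bar>d\<bar>}" by simp
      fix t assume t: "t \<in> {-\<bar>d\<bar>..\<bar>d\<bar>}"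
      hence "y' + t *\<^sub>R axis k 1 \<in> U" using y'b sub by auto
      hence "((\<lambda>s. \<psi> ((y' + t *\<^sub>R axis k 1) + s *\<^sub>R axis k 1)) has_real_derivative 0) (at 0)"
        using D by blast
      moreover have "(\<lambda>s. \<psi> ((y' + t *\<^sub>R axis k 1) + s *\<^sub>R axis k 1)) = (\<lambda>s. G (s + t))"
        unfolding G_def by (simp add: algebra_simps)
      ultimately have "(G has_real_derivative 0) (at (0 + t))"
        using DERIV_shift[of G 0 0 t] by simp
      thus "(G has_real_derivative 0) (at t within {-\<bar>d\<bar>..\<bar>d\<bar>})"
        by (simp add: has_field_derivative_at_within)
    qed
    then obtain c where c: "\<forall>t\<in>{-\<bar>d\<bar>..\<bar>d\<bar>}. G t = c" by blast
    have "0 \<in> {-\<bar>d\<bar>..\<bar>d\<bar>}" "d \<in> {-\<bar>d\<bar>..\<bar>d\<bar>}" by auto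
    hence "G 0 = G d" using c by simp
    moreover have "y' + d *\<^sub>R axis k 1 = y" unfolding y'_def d_def by (auto simp: vec_eq_iff axis_def)
    ultimately have "\<psi> y' = \<psi> y" unfolding G_def by simp
    thus "\<psi> y = \<psi> x" using e1 by simp
  qed
qed

lemma const_connected:
  fixes \<psi> :: "real^'i \<Rightarrow> real"
  assumes "open U" "connected U"
    and D: "\<forall>z\<in>U. \<forall>k. ((\<lambda>t. \<psi> (z + t *\<^sub>R axis k 1)) has_real_derivative 0) (at 0)"
  shows "\<forall>x\<in>U. \<forall>y\<in>U. \<psi> x = \<psi> y"
proof -
  have "\<psi> constant_on U"
  proof (rule locally_constant_imp_constant[OF assms(2)])
    fix x assume x: "x \<in> U"
    then obtain r where r: "r > 0" "ball x r \<subseteq> U" using assms(1) open_contains_ball by blast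
    have c: "\<forall>y\<in>ball x r. \<psi> y = \<psi> x"
      using local_const_box[OF r(2) D, of UNIV] by simp
    have o: "openin (top_of_set U) (ball x r)" using r(2) by (simp add: open_subset)
    show "\<exists>T. openin (top_of_set U) T \<and> x \<in> T \<and> (\<forall>y\<in>T. \<psi> y = \<psi> x)"
    proof (intro exI[of _ "ball x r"] conjI)
      show "openin (top_of_set U) (ball x r)" by (rule o)
      show "x \<in> ball x r" using r(1) by simp
      show "\<forall>y\<in>ball x r. \<psi> y = \<psi> x" by (rule c)
    qed
  qed
  then obtain c where "\<forall>x\<in>U. \<psi> x = c" unfolding constant_on_def by blast
  thus ?thesis by simp
qed

lemma sum_delta_r: "(\<Sum>d\<in>(UNIV::'i::finite set). f d * (if d = k then c else 0)) = f k * (c::real)"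
proof -
  have "(\<Sum>d\<in>(UNIV::'i set). f d * (if d = k then c else 0)) = (\<Sum>d\<in>UNIV. if d = k then f k * c else 0)"
    by (rule sum.cong) auto
  also have "\<dots> = f k * c" by simp
  finally show ?thesis .
qed

lemma sum_delta_l: "(\<Sum>d\<in>(UNIV::'i::finite set). (if d = k then c else 0) * f d) = (c::real) * f k"
proof -
  have "(\<Sum>d\<in>(UNIV::'i set). (if d = k then c else 0) * f d) = (\<Sum>d\<in>UNIV. if d = k then c * f k else 0)"
    by (rule sum.cong) auto
  also have "\<dots> = c * f k" by simp
  finally show ?thesis .
qed

lemma proj_has:
  fixes q :: "real^'i"
  assumes "i \<noteq> j" "dn 0 W G" "(q$i, q$j) \<in> W"
  shows "((\<lambda>t. G ((q + t *\<^sub>R axis k 1)$i, (q + t *\<^sub>R axis k 1)$j)) has_real_derivative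
           pdv ((axis k 1 :: real^'i)$i, (axis k 1 :: real^'i)$j) G (q$i, q$j)) (at 0)"
proof -
  let ?P = "((axis k 1 :: real^'i)$i, (axis k 1 :: real^'i)$j)"
  have "((\<lambda>t. G ((q$i, q$j) + t *\<^sub>R ?P)) has_real_derivative pdv ?P G (q$i, q$j)) (at 0)"
  proof (cases "?P = 0")
    case True show ?thesis unfolding True pdv_zero by simp
  next
    case False
    hence "?P \<in> Basis" using pi_axis[OF assms(1), of k] by blast
    thus ?thesis using assms(2,3) unfolding dn0 by (intro pdv_diff) blast
  qed
  thus ?thesis unfolding line_proj .
qed

locale ppw =
  fixes iv iu ixn :: "'i::finite"
    and U :: "(real^'i) set"
    and W :: "(real \<times> real) set"
    and A :: "real set"
    and F :: "real \<times> real \<Rightarrow> real"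
    and a :: "real \<Rightarrow> real"
    and \<Gamma> :: "'i \<Rightarrow> 'i \<Rightarrow> 'i \<Rightarrow> real^'i \<Rightarrow> real"
  assumes idx: "iv \<noteq> iu" "iv \<noteq> ixn" "iu \<noteq> ixn"
    and U_open: "open U"
    and F_smooth: "smooth_on W F" and F_dom: "\<forall>p\<in>U. (p $ ixn, p $ iu) \<in> W"
    and a_smooth: "smooth_on A a" and a_dom: "\<forall>p\<in>U. p $ iu \<in> A"
    and weyl: "weyl_connection U (ppw_metric iv iu ixn F a) (ppw_form iu ixn F) \<Gamma>"
begin

abbreviation "g \<equiv> ppw_metric iv iu ixn F a"
abbreviation "om \<equiv> ppw_form iu ixn F"
abbreviation pk :: "'i \<Rightarrow> real \<times> real" where
  "pk k \<equiv> ((axis k 1 :: real^'i)$ixn, (axis k 1 :: real^'i)$iu)"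
abbreviation pr :: "real^'i \<Rightarrow> real \<times> real" where
  "pr q \<equiv> (q$ixn, q$iu)"
abbreviation X :: "'i \<Rightarrow> 'i \<Rightarrow> 'i \<Rightarrow> real^'i \<Rightarrow> real" where
  "X c a' b p \<equiv> (\<Sum>d\<in>UNIV. \<Gamma> d a' b p * g d c p)"

lemma pk_xn: "pk ixn = (1, 0)" using idx by (simp add: axis_def)
lemma pk_u: "pk iu = (0, 1)" using idx by (simp add: axis_def)
lemma pk_other: "k \<noteq> ixn \<Longrightarrow> k \<noteq> iu \<Longrightarrow> pk k = 0" by (simp add: axis_def zero_prod_def)

lemma W_open: "open W" using F_smooth smooth_dn by blast
lemma F_dn: "dn n W F" using F_smooth smooth_dn by blast

lemma g_sym: "g i j p = g j i p"
proof (cases "i = j")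
  case True thus ?thesis by simp
next
  case False
  have "((i = iv \<and> j = iu) \<or> (i = iu \<and> j = iv)) = ((j = iv \<and> i = iu) \<or> (j = iu \<and> i = iv))" by blast
  moreover have "\<not> (i = j \<and> i \<notin> {iv, iu, ixn})" "\<not> (j = i \<and> j \<notin> {iv, iu, ixn})"
    "\<not> (i = ixn \<and> j = ixn)" "\<not> (j = ixn \<and> i = ixn)" "\<not> (i = iu \<and> j = iu)" "\<not> (j = iu \<and> i = iu)"
    using False by auto
  ultimately show ?thesis unfolding ppw_metric_def by (simp only: if_False)
qed
lemma g_v1: "g k iv p = (if k = iu then 1 else 0)" unfolding ppw_metric_def using idx by auto
lemma g_v2: "g iv k p = (if k = iu then 1 else 0)" unfolding ppw_metric_def using idx by auto
lemma g_x1: "g k ixn p = (if k = ixn then exp (- 2 * F (p$ixn, p$iu)) else 0)"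
  unfolding ppw_metric_def using idx by auto
lemma g_xx: "g ixn ixn = (\<lambda>p. exp (- 2 * F (p$ixn, p$iu)))"
  unfolding ppw_metric_def using idx by auto
lemma g_vfun: "g b iv = (\<lambda>p. if b = iu then 1 else 0)" using g_v1 by auto
lemma om_eq: "om k p = (if k = iu then pdv (0, 1) F (p$ixn, p$iu) else 0)"
  unfolding ppw_form_def by simp

lemma Gam_sym: "p \<in> U \<Longrightarrow> \<Gamma> k a' b p = \<Gamma> k b a' p"
  using weyl unfolding weyl_connection_def by blast
lemma Gam_dn: "dn n U (\<Gamma> k a' b)"
  using weyl unfolding weyl_connection_def smooth_dn by blast

lemma weyl_eq: "p \<in> U \<Longrightarrow> cpd a' (g b c) p - X c a' b p - X b a' c p = - 2 * om a' p * g b c p"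
proof -
  assume p: "p \<in> U"
  have "nabla2 \<Gamma> g a' b c p = - 2 * om a' p * g b c p" using weyl p unfolding weyl_connection_def by blast
  moreover have "(\<Sum>d\<in>UNIV. \<Gamma> d a' c p * g b d p) = X b a' c p" using g_sym by metis
  ultimately show ?thesis unfolding nabla2_def by simp
qed

lemma cpd_constfun: "cpd k (\<lambda>q. c) p = 0"
  unfolding cpd_def pdv_const ..

lemma g_shift_v: "g b c (p + t *\<^sub>R axis iv 1) = g b c p"
proof -
  have 1: "(\<Sum>k\<in>UNIV - {iv, iu, ixn}. ((p + t *\<^sub>R axis iv 1) $ k)^2) = (\<Sum>k\<in>UNIV - {iv, iu, ixn}. (p $ k)^2)"
    by (intro sum.cong) (auto simp: axis_def)
  have 2: "(p + t *\<^sub>R axis iv 1) $ iu = p $ iu" "(p + t *\<^sub>R axis iv 1) $ ixn = p $ ixn"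
    using idx by (auto simp: axis_def)
  show ?thesis unfolding ppw_metric_def by (simp only: 1 2)
qed

lemma cpd_v: "cpd iv (g b c) p = 0"
  unfolding cpd_def pdv_def g_shift_v by simp

lemma om_v: "om iv p = 0" using idx om_eq by simp

lemma X_sym: "p \<in> U \<Longrightarrow> X c a' b p = X c b a' p"
  using Gam_sym by simp

lemma Gu: "p \<in> U \<Longrightarrow> \<Gamma> iu a' b p = (if a' = iu \<and> b = iu then 2 * pdv (0, 1) F (p$ixn, p$iu) else 0)"
proof -
  assume p: "p \<in> U"
  have Xv: "X iv c d p = \<Gamma> iu c d p" for c d unfolding g_v1 sum_delta_r by simp
  have e1: "cpd a' (g b iv) p - X iv a' b p - X b a' iv p = - 2 * om a' p * g b iv p" using weyl_eq[OF p] .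
  have e2: "cpd b (g a' iv) p - X iv b a' p - X a' b iv p = - 2 * om b p * g a' iv p" using weyl_eq[OF p] .
  have e3: "cpd iv (g a' b) p - X b iv a' p - X a' iv b p = - 2 * om iv p * g a' b p" using weyl_eq[OF p] .
  have c1: "cpd a' (g b iv) p = 0" "cpd b (g a' iv) p = 0" unfolding g_vfun by (rule cpd_constfun)+
  have z: "- 2 * om iv p * g a' b p = 0" by (simp add: om_v)
  have s1: "X iv b a' p = X iv a' b p" by (rule X_sym[OF p])
  have s2: "X b iv a' p = X b a' iv p" by (rule X_sym[OF p])
  have s3: "X a' iv b p = X a' b iv p" by (rule X_sym[OF p])
  have "2 * X iv a' b p = 2 * om a' p * g b iv p + 2 * om b p * g a' iv p"
    using e1 e2 e3 c1 cpd_v[of a' b p] z s1 s2 s3 by linarith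
  hence "\<Gamma> iu a' b p = om a' p * g b iv p + om b p * g a' iv p" unfolding Xv by simp
  thus ?thesis unfolding om_eq g_v1 by auto
qed

lemma F_has: "p \<in> U \<Longrightarrow> ((\<lambda>t. F ((p + t *\<^sub>R axis k 1)$ixn, (p + t *\<^sub>R axis k 1)$iu)) has_real_derivative
           pdv (pk k) F (p$ixn, p$iu)) (at 0)"
  using proj_has[of ixn iu W F p k] idx F_dn F_dom by blast

lemma Gxn: "p \<in> U \<Longrightarrow> \<Gamma> ixn e ixn p = om e p - pdv (pk e) F (p$ixn, p$iu)"
proof -
  assume p: "p \<in> U"
  let ?E = "exp (- 2 * F (p$ixn, p$iu))"
  have Xx: "X ixn e ixn p = \<Gamma> ixn e ixn p * ?E" unfolding g_x1 sum_delta_r by simp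
  have e1: "cpd e (g ixn ixn) p - X ixn e ixn p - X ixn e ixn p = - 2 * om e p * g ixn ixn p"
    using weyl_eq[OF p] .
  have "((\<lambda>t. exp (- 2 * F ((p + t *\<^sub>R axis e 1)$ixn, (p + t *\<^sub>R axis e 1)$iu))) has_real_derivative
          exp (- 2 * F ((p + 0 *\<^sub>R axis e 1)$ixn, (p + 0 *\<^sub>R axis e 1)$iu)) * (- 2 * pdv (pk e) F (p$ixn, p$iu))) (at 0)"
    by (rule DERIV_chain2[OF DERIV_exp]) (intro DERIV_cmult F_has p)
  hence "cpd e (g ixn ixn) p = ?E * (- 2 * pdv (pk e) F (p$ixn, p$iu))"
    unfolding g_xx cpd_def by (intro pdv_has) simp
  hence "?E * (- 2 * pdv (pk e) F (p$ixn, p$iu)) - 2 * (\<Gamma> ixn e ixn p * ?E) = - 2 * om e p * ?E"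
    using e1 Xx g_xx by simp
  hence "?E * (\<Gamma> ixn e ixn p - om e p + pdv (pk e) F (p$ixn, p$iu)) = 0"
    by (simp add: algebra_simps)
  thus ?thesis by simp
qed

end

context ppw begin

abbreviation "Ou \<equiv> pdv (0, 1) F"
abbreviation "fx \<equiv> pdv (1, 0) (pdv (0, 1) F)"

lemma b01: "((0::real), (1::real)) \<in> Basis" by (simp add: Basis_prod_def)
lemma b10: "((1::real), (0::real)) \<in> Basis" by (simp add: Basis_prod_def)

lemma Ou_dn: "dn n W Ou" using F_dn[of "Suc n"] b01 unfolding dn_Suc by blast
lemma fx_dn: "dn n W fx" using Ou_dn[of "Suc n"] b10 unfolding dn_Suc by blast

lemma Gu': "p \<in> U \<Longrightarrow> \<Gamma> iu a' e p = (if e = iu then (if a' = iu then 2 * Ou (p$ixn, p$iu) else 0) else 0)"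
  using Gu by simp

lemma cpd_Gu: "p \<in> U \<Longrightarrow> cpd a' (\<Gamma> iu b c) p = (if b = iu \<and> c = iu then 2 * pdv (pk a') Ou (p$ixn, p$iu) else 0)"
proof -
  assume p: "p \<in> U"
  let ?f = "\<lambda>q::real^'i. if b = iu \<and> c = iu then 2 * Ou (q$ixn, q$iu) else 0"
  have d: "((\<lambda>t. ?f (p + t *\<^sub>R axis a' 1)) has_real_derivative
      (if b = iu \<and> c = iu then 2 * pdv (pk a') Ou (p$ixn, p$iu) else 0)) (at 0)"
  proof (cases "b = iu \<and> c = iu")
    case True
    have "((\<lambda>t. 2 * Ou ((p + t *\<^sub>R axis a' 1)$ixn, (p + t *\<^sub>R axis a' 1)$iu)) has_real_derivative
      2 * pdv (pk a') Ou (p$ixn, p$iu)) (at 0)"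
      using proj_has[of ixn iu W Ou p a'] idx Ou_dn F_dom p by (intro DERIV_cmult) blast
    thus ?thesis using True by simp
  next
    case False
    hence "(\<lambda>t. ?f (p + t *\<^sub>R axis a' 1)) = (\<lambda>t. 0)" by auto
    thus ?thesis using False by (simp only: if_False) simp
  qed
  have e: "\<forall>q\<in>U. ?f q = \<Gamma> iu b c q" using Gu by simp
  show ?thesis unfolding cpd_def by (rule pdv_has[OF has_local[OF U_open p e d]])
qed

lemma curv_u: "p \<in> U \<Longrightarrow> curv \<Gamma> iu c a' b p =
   2 * (if c = iu then (if b = iu then pdv (pk a') Ou (p$ixn, p$iu) else 0)
                     - (if a' = iu then pdv (pk b) Ou (p$ixn, p$iu) else 0) else 0)"
proof -
  assume p: "p \<in> U"
  have s1: "(\<Sum>e\<in>UNIV. \<Gamma> iu a' e p * \<Gamma> e b c p) = (if a' = iu then 2 * Ou (p$ixn, p$iu) else 0) * \<Gamma> iu b c p"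
    by (subst sum.cong[OF refl, of _ _ "\<lambda>e. (if e = iu then (if a' = iu then 2 * Ou (p$ixn, p$iu) else 0) else 0) * \<Gamma> e b c p"])
       (simp_all add: Gu'[OF p] sum_delta_l)
  have s2: "(\<Sum>e\<in>UNIV. \<Gamma> iu b e p * \<Gamma> e a' c p) = (if b = iu then 2 * Ou (p$ixn, p$iu) else 0) * \<Gamma> iu a' c p"
    by (subst sum.cong[OF refl, of _ _ "\<lambda>e. (if e = iu then (if b = iu then 2 * Ou (p$ixn, p$iu) else 0) else 0) * \<Gamma> e a' c p"])
       (simp_all add: Gu'[OF p] sum_delta_l)
  have "(\<Sum>e\<in>UNIV. \<Gamma> iu a' e p * \<Gamma> e b c p - \<Gamma> iu b e p * \<Gamma> e a' c p) = 0"
    unfolding sum_subtractf s1 s2 by (simp add: Gu[OF p])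
  thus ?thesis unfolding curv_def cpd_Gu[OF p] by simp
qed

lemma R0: "p \<in> U \<Longrightarrow> curv \<Gamma> iu iu ixn iu p = 2 * fx (p$ixn, p$iu)"
  using curv_u[of p iu ixn iu] idx pk_xn by simp

lemma R_f_xn_u: "p \<in> U \<Longrightarrow> curv \<Gamma> iu f ixn iu p = (if f = iu then 2 * fx (p$ixn, p$iu) else 0)"
  using curv_u[of p f ixn iu] idx pk_xn by simp

lemma R_u_xn_f: "p \<in> U \<Longrightarrow> curv \<Gamma> iu iu ixn f p = (if f = iu then 2 * fx (p$ixn, p$iu) else 0)"
  using curv_u[of p iu ixn f] idx pk_xn by simp

lemma R_u_f_u: "p \<in> U \<Longrightarrow> curv \<Gamma> iu iu f iu p = (if f = ixn then 2 * fx (p$ixn, p$iu) else 0)"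
proof -
  assume p: "p \<in> U"
  have "curv \<Gamma> iu iu f iu p = 2 * (pdv (pk f) Ou (p$ixn, p$iu) - (if f = iu then pdv (pk iu) Ou (p$ixn, p$iu) else 0))"
    using curv_u[OF p, of iu f iu] by simp
  thus ?thesis using idx pk_xn pk_other[of f] pdv_zero by (cases "f = ixn"; cases "f = iu") auto
qed

lemma cpd_R0: "p \<in> U \<Longrightarrow> cpd e (curv \<Gamma> iu iu ixn iu) p = 2 * pdv (pk e) fx (p$ixn, p$iu)"
proof -
  assume p: "p \<in> U"
  have d: "((\<lambda>t. 2 * fx ((p + t *\<^sub>R axis e 1)$ixn, (p + t *\<^sub>R axis e 1)$iu)) has_real_derivative
      2 * pdv (pk e) fx (p$ixn, p$iu)) (at 0)"
    using proj_has[of ixn iu W fx p e] idx fx_dn F_dom p by (intro DERIV_cmult) blast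
  have e: "\<forall>q\<in>U. 2 * fx (q$ixn, q$iu) = curv \<Gamma> iu iu ixn iu q" using R0 by simp
  show ?thesis unfolding cpd_def by (rule pdv_has[OF has_local[OF U_open p e d]])
qed

lemma nab: "p \<in> U \<Longrightarrow> nabla13 \<Gamma> (curv \<Gamma>) e iu iu ixn iu p =
   2 * pdv (pk e) fx (p$ixn, p$iu) - 2 * fx (p$ixn, p$iu) * \<Gamma> ixn e ixn p
   - (if e = iu then 4 * Ou (p$ixn, p$iu) * fx (p$ixn, p$iu) else 0)"
proof -
  assume p: "p \<in> U"
  have t1: "(\<Sum>f\<in>UNIV. \<Gamma> iu e f p * curv \<Gamma> f iu ixn iu p) =
      (if e = iu then 2 * Ou (p$ixn, p$iu) else 0) * (2 * fx (p$ixn, p$iu))"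
    unfolding Gu'[OF p] sum_delta_l R0[OF p] ..
  have t2: "(\<Sum>f\<in>UNIV. \<Gamma> f e iu p * curv \<Gamma> iu f ixn iu p) = \<Gamma> iu e iu p * (2 * fx (p$ixn, p$iu))"
    unfolding R_f_xn_u[OF p] sum_delta_r ..
  have t3: "(\<Sum>f\<in>UNIV. \<Gamma> f e ixn p * curv \<Gamma> iu iu f iu p) = \<Gamma> ixn e ixn p * (2 * fx (p$ixn, p$iu))"
    unfolding R_u_f_u[OF p] sum_delta_r ..
  have t4: "(\<Sum>f\<in>UNIV. \<Gamma> f e iu p * curv \<Gamma> iu iu ixn f p) = \<Gamma> iu e iu p * (2 * fx (p$ixn, p$iu))"
    unfolding R_u_xn_f[OF p] sum_delta_r ..
  have g: "\<Gamma> iu e iu p = (if e = iu then 2 * Ou (p$ixn, p$iu) else 0)" using Gu[OF p] by simp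
  show ?thesis unfolding nabla13_def t1 t2 t3 t4 cpd_R0[OF p] g by simp
qed

end

lemma if_diff: "f differentiable F \<Longrightarrow> h differentiable F \<Longrightarrow> (\<lambda>t. if C then f t else h t) differentiable F"
  by (cases C) auto

lemma shift_diff:
  fixes f :: "real \<Rightarrow> real" and x :: real
  assumes "(\<lambda>t. f (x + t *\<^sub>R (1::real))) differentiable (at 0)"
  shows "f differentiable (at x)"
proof -
  obtain D where "((\<lambda>t. f (t + x)) has_real_derivative D) (at 0)"
    using assms real_differentiable_def by (auto simp: add.commute)
  hence "(f has_real_derivative D) (at (0 + x))" using DERIV_shift by blast
  thus ?thesis using real_differentiable_def by auto
qed

context ppw begin

lemma a_diff: "y \<in> A \<Longrightarrow> a differentiable (at y)"
  using a_smooth unfolding smooth_dn dn0[symmetric] 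
  by (metis dn_mono[of _ A a 0] le0 dn0 Basis_real_def insertI1 shift_diff)

lemma g_diff: "p \<in> U \<Longrightarrow> (\<lambda>t. g b c (p + t *\<^sub>R axis e 1)) differentiable (at 0)"
proof -
  assume p: "p \<in> U"
  have d1: "(\<lambda>t. exp (- 2 * F ((p + t *\<^sub>R axis e 1)$ixn, (p + t *\<^sub>R axis e 1)$iu))) differentiable (at 0)"
  proof -
    have "((\<lambda>t. exp (- 2 * F ((p + t *\<^sub>R axis e 1)$ixn, (p + t *\<^sub>R axis e 1)$iu))) has_real_derivative
          exp (- 2 * F ((p + 0 *\<^sub>R axis e 1)$ixn, (p + 0 *\<^sub>R axis e 1)$iu)) * (- 2 * pdv (pk e) F (p$ixn, p$iu))) (at 0)"
      by (rule DERIV_chain2[OF DERIV_exp]) (intro DERIV_cmult F_has p)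
    thus ?thesis using real_differentiable_def by blast
  qed
  have d2: "(\<lambda>t. a ((p + t *\<^sub>R axis e 1)$iu)) differentiable (at 0)"
  proof -
    have "a differentiable (at ((\<lambda>t. p$iu + t * (axis e 1 :: real^'i)$iu) 0))" using a_diff a_dom p by simp
    moreover have "(\<lambda>t. p$iu + t * (axis e 1 :: real^'i)$iu) differentiable (at 0)" by simp
    ultimately have "(\<lambda>t. a (p$iu + t * (axis e 1 :: real^'i)$iu)) differentiable (at 0)"
      by (rule differentiable_compose)
    thus ?thesis by simp
  qed
  have d3: "(\<lambda>t. \<Sum>k\<in>UNIV - {iv, iu, ixn}. ((p + t *\<^sub>R axis e 1)$k)^2) differentiable (at 0)"
    by simp
  show ?thesis unfolding ppw_metric_def
    by (intro if_diff differentiable_const d1 differentiable_mult d2 d3)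
qed

definition phi :: "real^'i \<Rightarrow> real" where
  "phi q = (fx (q$ixn, q$iu) * fx (q$ixn, q$iu)) powr (1/3) * exp (2/3 * F (q$ixn, q$iu))"

lemma phi_pos: "p \<in> U \<Longrightarrow> fx (p$ixn, p$iu) \<noteq> 0 \<Longrightarrow> phi p > 0"
  unfolding phi_def by simp

definition gpow :: "nat \<Rightarrow> real \<Rightarrow> real" where
  "gpow k y = (\<Prod>j<k. (1/3 - real j)) * y powr (1/3 - real k)"

lemma gpow_deriv: "y \<in> {0<..} \<Longrightarrow> (gpow k has_real_derivative gpow (Suc k) y) (at y)"
proof -
  assume y: "y \<in> {0<..}"
  have "((\<lambda>y. (\<Prod>j<k. (1/3 - real j)) * y powr (1/3 - real k)) has_real_derivative
         (\<Prod>j<k. (1/3 - real j)) * ((1/3 - real k) * y powr (1/3 - real k - 1))) (at y)"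
    using y by (intro DERIV_cmult has_real_derivative_powr) simp
  moreover have "(\<Prod>j<k. (1/3 - real j)) * ((1/3 - real k) * y powr (1/3 - real k - 1)) = gpow (Suc k) y"
    unfolding gpow_def by (simp add: algebra_simps)
  ultimately show ?thesis unfolding gpow_def[abs_def] by (simp add: mult.assoc)
qed

lemma phi_dn:
  assumes nz: "\<forall>p\<in>U. fx (p$ixn, p$iu) \<noteq> 0"
  shows "dn n U phi"
proof -
  have ne: "ixn \<noteq> iu" using idx by simp
  have s1: "dn n U (\<lambda>q. fx (q$ixn, q$iu))" by (rule dn_proj[OF ne F_dom fx_dn])
  have s2: "dn n U (\<lambda>q. fx (q$ixn, q$iu) * fx (q$ixn, q$iu))" by (rule dn_mult[OF U_open s1 s1])
  have pos: "\<forall>q\<in>U. fx (q$ixn, q$iu) * fx (q$ixn, q$iu) \<in> {0<..}" using nz by (auto simp: zero_less_mult_iff linorder_neq_iff)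
  have "dn n U (\<lambda>q. gpow 0 (fx (q$ixn, q$iu) * fx (q$ixn, q$iu)))"
    by (rule dn_comp1[OF U_open open_greaterThan _ pos s2]) (simp add: gpow_deriv)
  hence p1: "dn n U (\<lambda>q. (fx (q$ixn, q$iu) * fx (q$ixn, q$iu)) powr (1/3))"
    unfolding gpow_def by simp
  have s3: "dn n U (\<lambda>q. 2/3 * F (q$ixn, q$iu))"
    by (rule dn_mult[OF U_open dn_const dn_proj[OF ne F_dom F_dn]])
  have "dn n U (\<lambda>q. (\<lambda>k::nat. exp) 0 (2/3 * F (q$ixn, q$iu)))"
    by (rule dn_comp1[OF U_open open_UNIV _ _ s3]) auto
  hence p2: "dn n U (\<lambda>q. exp (2/3 * F (q$ixn, q$iu)))" by simp
  show ?thesis unfolding phi_def[abs_def] by (rule dn_mult[OF U_open p1 p2])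
qed

lemma phi_has:
  assumes p: "p \<in> U" and nz: "fx (p$ixn, p$iu) \<noteq> 0"
  shows "((\<lambda>t. phi (p + t *\<^sub>R axis e 1)) has_real_derivative
     phi p * (2/3) * (pdv (pk e) fx (p$ixn, p$iu) / fx (p$ixn, p$iu) + pdv (pk e) F (p$ixn, p$iu))) (at 0)"
proof -
  define u where "u t = fx ((p + t *\<^sub>R axis e 1)$ixn, (p + t *\<^sub>R axis e 1)$iu)" for t
  define v where "v t = F ((p + t *\<^sub>R axis e 1)$ixn, (p + t *\<^sub>R axis e 1)$iu)" for t
  define u' where "u' = pdv (pk e) fx (p$ixn, p$iu)"
  define v' where "v' = pdv (pk e) F (p$ixn, p$iu)"
  have du: "(u has_real_derivative u') (at 0)"
    unfolding u_def u'_def using proj_has[of ixn iu W fx p e] idx fx_dn F_dom p by blast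
  have dv: "(v has_real_derivative v') (at 0)"
    unfolding v_def v'_def using F_has[OF p] .
  have u0: "u 0 = fx (p$ixn, p$iu)" "v 0 = F (p$ixn, p$iu)" unfolding u_def v_def by simp_all
  have Y: "u 0 * u 0 > 0" using nz u0 by (auto simp: zero_less_mult_iff linorder_neq_iff)
  have dY: "((\<lambda>t. u t * u t) has_real_derivative (u' * u 0 + u' * u 0)) (at 0)"
    using DERIV_mult[OF du du] by (simp add: algebra_simps)
  have dP: "((\<lambda>t. (u t * u t) powr (1/3)) has_real_derivative
      (1/3 * (u 0 * u 0) powr (1/3 - 1)) * (u' * u 0 + u' * u 0)) (at 0)"
    by (rule DERIV_chain2[OF has_real_derivative_powr[OF Y] dY])
  have dE: "((\<lambda>t. exp (2/3 * v t)) has_real_derivative exp (2/3 * v 0) * (2/3 * v')) (at 0)"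
    by (rule DERIV_chain2[OF DERIV_exp]) (intro DERIV_cmult dv)
  have d: "((\<lambda>t. (u t * u t) powr (1/3) * exp (2/3 * v t)) has_real_derivative
      (1/3 * (u 0 * u 0) powr (1/3 - 1)) * (u' * u 0 + u' * u 0) * exp (2/3 * v 0)
      + (u 0 * u 0) powr (1/3) * (exp (2/3 * v 0) * (2/3 * v'))) (at 0)"
    using DERIV_mult[OF dP dE] by (simp add: mult.commute)
  have pw: "(u 0 * u 0) powr (1/3 - 1) = (u 0 * u 0) powr (1/3) / (u 0 * u 0)"
    using Y powr_diff[of "u 0 * u 0" "1/3" 1] by simp
  have alg: "(1/3 * (P / (x * x))) * (u' * x + u' * x) * E + P * (E * (2/3 * v')) = P * E * (2/3) * (u' / x + v')"
    if "x \<noteq> 0" for x P E :: real using that by (simp add: field_simps)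
  have eq: "(1/3 * (u 0 * u 0) powr (1/3 - 1)) * (u' * u 0 + u' * u 0) * exp (2/3 * v 0)
      + (u 0 * u 0) powr (1/3) * (exp (2/3 * v 0) * (2/3 * v')) = phi p * (2/3) * (u' / u 0 + v')"
    unfolding pw alg[OF nz[folded u0(1)]] unfolding phi_def u0 ..
  have f: "(\<lambda>t. phi (p + t *\<^sub>R axis e 1)) = (\<lambda>t. (u t * u t) powr (1/3) * exp (2/3 * v t))"
    unfolding phi_def u_def v_def ..
  have "((\<lambda>t. phi (p + t *\<^sub>R axis e 1)) has_real_derivative phi p * (2/3) * (u' / u 0 + v')) (at 0)"
    using d unfolding eq f .
  thus ?thesis unfolding u'_def v'_def u0 .
qed

end

context ppw begin

lemma conf_cpd:
  assumes sm: "smooth_on U \<phi>" and hq: "\<forall>i j. \<forall>p\<in>U. h i j p = \<phi> p * g i j p" and p: "p \<in> U"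
    and nh: "nabla2 \<Gamma> h a' iv iu p = - 2 * w * h iv iu p"
  shows "cpd a' \<phi> p = \<phi> p * (2 * om a' p - 2 * w)"
proof -
  have c1: "cpd a' (h iv iu) p = cpd a' \<phi> p"
    unfolding cpd_def by (rule pdv_local[OF U_open p]) (use hq g_v2 in simp)
  have s1: "(\<Sum>d\<in>UNIV. \<Gamma> d a' iv p * h d iu p) = \<phi> p * (\<Sum>d\<in>UNIV. \<Gamma> d a' iv p * g d iu p)"
    using hq p by (simp add: sum_distrib_left mult.left_commute)
  have s2: "(\<Sum>d\<in>UNIV. \<Gamma> d a' iu p * h iv d p) = \<phi> p * (\<Sum>d\<in>UNIV. \<Gamma> d a' iu p * g iv d p)"
    using hq p by (simp add: sum_distrib_left mult.left_commute)
  have hv: "h iv iu p = \<phi> p" using hq p g_v2 by simp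
  have gw: "nabla2 \<Gamma> g a' iv iu p = - 2 * om a' p * g iv iu p"
    using weyl p unfolding weyl_connection_def by blast
  have gc: "g iv iu = (\<lambda>q. 1)" using g_v2 by auto
  have c0: "cpd a' (g iv iu) p = 0" unfolding gc by (rule cpd_constfun)
  have S: "(\<Sum>d\<in>UNIV. \<Gamma> d a' iv p * g d iu p) + (\<Sum>d\<in>UNIV. \<Gamma> d a' iu p * g iv d p) = 2 * om a' p"
    using gw c0 g_v2[of iu p] unfolding nabla2_def by simp
  have "cpd a' \<phi> p - \<phi> p * ((\<Sum>d\<in>UNIV. \<Gamma> d a' iv p * g d iu p) + (\<Sum>d\<in>UNIV. \<Gamma> d a' iu p * g iv d p)) = - 2 * w * \<phi> p"
    using nh unfolding nabla2_def c1 s1 s2 hv by (simp add: algebra_simps)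
  hence "cpd a' \<phi> p - \<phi> p * (2 * om a' p) = - 2 * w * \<phi> p" unfolding S .
  thus ?thesis by (simp add: algebra_simps)
qed

end

theorem mainTheorem14:
  fixes iv iu ixn :: "'i::finite"
    and U :: "(real^'i) set"
    and W :: "(real \<times> real) set"
    and A :: "real set"
    and F :: "real \<times> real \<Rightarrow> real"
    and a :: "real \<Rightarrow> real"
    and \<Gamma> :: "'i \<Rightarrow> 'i \<Rightarrow> 'i \<Rightarrow> real^'i \<Rightarrow> real"
  assumes dim: "CARD('i) \<ge> 4"
    and idx: "iv \<noteq> iu" "iv \<noteq> ixn" "iu \<noteq> ixn"
    and U_open: "open U" and U_conn: "connected U"
    and F_smooth: "smooth_on W F" and F_dom: "\<forall>p\<in>U. (p $ ixn, p $ iu) \<in> W"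
    and a_smooth: "smooth_on A a" and a_dom: "\<forall>p\<in>U. p $ iu \<in> A"
    and F_eq: "\<forall>p\<in>U. pdv (0, 1) (pdv (0, 1) F) (p $ ixn, p $ iu)
                       - (pdv (0, 1) F (p $ ixn, p $ iu))^2 = - a (p $ iu)"
    and F_nondeg: "\<forall>p\<in>U. pdv (1, 0) (pdv (0, 1) F) (p $ ixn, p $ iu) \<noteq> 0"
    and weyl: "weyl_connection U (ppw_metric iv iu ixn F a) (ppw_form iu ixn F) \<Gamma>"
    and recurrent: "\<exists>\<theta>. (\<forall>e. smooth_on U (\<theta> e)) \<and>
           (\<forall>p\<in>U. \<forall>e d c a' b. nabla13 \<Gamma> (curv \<Gamma>) e d c a' b p = \<theta> e p * curv \<Gamma> d c a' b p)"
  shows "(\<exists>h w. conformal_on U (ppw_metric iv iu ixn F a) h \<and> (\<forall>k. smooth_on U (w k)) \<and>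
            (\<forall>p\<in>U. (\<forall>a' b c. nabla2 \<Gamma> h a' b c p = - 2 * w a' p * h b c p) \<and>
                    (\<forall>e d c a' b. nabla13 \<Gamma> (curv \<Gamma>) e d c a' b p = - 3 * w e p * curv \<Gamma> d c a' b p)))
       \<and> (\<forall>h1 w1 h2 w2.
            conformal_on U (ppw_metric iv iu ixn F a) h1 \<and> (\<forall>k. smooth_on U (w1 k)) \<and>
            (\<forall>p\<in>U. (\<forall>a' b c. nabla2 \<Gamma> h1 a' b c p = - 2 * w1 a' p * h1 b c p) \<and>
                    (\<forall>e d c a' b. nabla13 \<Gamma> (curv \<Gamma>) e d c a' b p = - 3 * w1 e p * curv \<Gamma> d c a' b p)) \<and>
            conformal_on U (ppw_metric iv iu ixn F a) h2 \<and> (\<forall>k. smooth_on U (w2 k)) \<and>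
            (\<forall>p\<in>U. (\<forall>a' b c. nabla2 \<Gamma> h2 a' b c p = - 2 * w2 a' p * h2 b c p) \<and>
                    (\<forall>e d c a' b. nabla13 \<Gamma> (curv \<Gamma>) e d c a' b p = - 3 * w2 e p * curv \<Gamma> d c a' b p))
            \<longrightarrow> (\<exists>c>0. \<forall>i j. \<forall>p\<in>U. h2 i j p = c * h1 i j p))"
proof -
  have loc: "ppw iv iu ixn U W A F a \<Gamma>"
    unfolding ppw_def using idx U_open F_smooth F_dom a_smooth a_dom weyl by blast
  interpret P: ppw iv iu ixn U W A F a \<Gamma> by (rule loc)
  let ?g = "ppw_metric iv iu ixn F a"
  let ?om = "ppw_form iu ixn F"
  let ?fx = "pdv (1, 0) (pdv (0, 1) F)"
  have nz: "\<forall>p\<in>U. ?fx (p$ixn, p$iu) \<noteq> 0" using F_nondeg by blast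
  obtain \<theta> where th_sm: "\<forall>e. smooth_on U (\<theta> e)" and
    th: "\<forall>p\<in>U. \<forall>e d c a' b. nabla13 \<Gamma> (curv \<Gamma>) e d c a' b p = \<theta> e p * curv \<Gamma> d c a' b p"
    using recurrent by blast
  have R0nz: "curv \<Gamma> iu iu ixn iu p \<noteq> 0" if p: "p \<in> U" for p
    using P.R0[OF p] nz p by simp
  have theta: "\<theta> e p = pdv ((axis e 1::real^'i)$ixn, (axis e 1::real^'i)$iu) ?fx (p$ixn, p$iu) / ?fx (p$ixn, p$iu)
      + pdv ((axis e 1::real^'i)$ixn, (axis e 1::real^'i)$iu) F (p$ixn, p$iu) - 3 * ?om e p"
    if p: "p \<in> U" for e p
  proof -
    let ?x = "?fx (p$ixn, p$iu)"
    let ?xe = "pdv ((axis e 1::real^'i)$ixn, (axis e 1::real^'i)$iu) ?fx (p$ixn, p$iu)"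
    let ?Fe = "pdv ((axis e 1::real^'i)$ixn, (axis e 1::real^'i)$iu) F (p$ixn, p$iu)"
    have 1: "nabla13 \<Gamma> (curv \<Gamma>) e iu iu ixn iu p = \<theta> e p * curv \<Gamma> iu iu ixn iu p" using th p by blast
    have 2: "(if e = iu then 4 * pdv (0, 1) F (p$ixn, p$iu) * ?x else 0) = 4 * ?om e p * ?x"
      by (simp add: P.om_eq)
    have "\<theta> e p * (2 * ?x) = 2 * ?xe - 2 * ?x * (?om e p - ?Fe) - 4 * ?om e p * ?x"
      using 1 unfolding P.nab[OF p] P.R0[OF p] P.Gxn[OF p] 2 by simp
    moreover have "?x \<noteq> 0" using nz p by blast
    ultimately show ?thesis by (simp add: field_simps)
  qed
  have exist: "\<exists>h w. conformal_on U ?g h \<and> (\<forall>k. smooth_on U (w k)) \<and>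
            (\<forall>p\<in>U. (\<forall>a' b c. nabla2 \<Gamma> h a' b c p = - 2 * w a' p * h b c p) \<and>
                    (\<forall>e d c a' b. nabla13 \<Gamma> (curv \<Gamma>) e d c a' b p = - 3 * w e p * curv \<Gamma> d c a' b p))"
  proof (intro exI conjI)
    define h where "h = (\<lambda>i j p. P.phi p * ?g i j p)"
    define w where "w = (\<lambda>e p. - (1/3) * \<theta> e p)"
    show "conformal_on U ?g h" unfolding conformal_on_def h_def
    proof (intro exI conjI)
      show "smooth_on U P.phi" unfolding smooth_dn using U_open P.phi_dn[OF nz] by blast
      show "\<forall>p\<in>U. 0 < P.phi p" using P.phi_pos nz by blast
    qed simp
    show "\<forall>k. smooth_on U (w k)"
    proof
      fix k
      have "dn n U (\<lambda>p. - (1/3) * \<theta> k p)" for n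
        using dn_mult[OF U_open dn_const[of n U "- (1/3)"], of "\<theta> k"] th_sm U_open unfolding smooth_dn by blast
      thus "smooth_on U (w k)" unfolding w_def smooth_dn using U_open by blast
    qed
    show "\<forall>p\<in>U. (\<forall>a' b c. nabla2 \<Gamma> h a' b c p = - 2 * w a' p * h b c p) \<and>
            (\<forall>e d c a' b. nabla13 \<Gamma> (curv \<Gamma>) e d c a' b p = - 3 * w e p * curv \<Gamma> d c a' b p)"
    proof (intro ballI conjI allI)
      fix p assume p: "p \<in> U"
      fix e d c a' b
      show "nabla13 \<Gamma> (curv \<Gamma>) e d c a' b p = - 3 * w e p * curv \<Gamma> d c a' b p"
        using th p unfolding w_def by simp
    next
      fix p assume p: "p \<in> U"
      fix a' b c
      let ?D = "P.phi p * (2/3) * (pdv ((axis a' 1::real^'i)$ixn, (axis a' 1::real^'i)$iu) ?fx (p$ixn, p$iu) / ?fx (p$ixn, p$iu)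
             + pdv ((axis a' 1::real^'i)$ixn, (axis a' 1::real^'i)$iu) F (p$ixn, p$iu))"
      have dphi: "((\<lambda>t. P.phi (p + t *\<^sub>R axis a' 1)) has_real_derivative ?D) (at 0)"
        using P.phi_has[OF p] nz p by blast
      have dg: "((\<lambda>t. ?g b c (p + t *\<^sub>R axis a' 1)) has_real_derivative cpd a' (?g b c) p) (at 0)"
        unfolding cpd_def by (rule pdv_diff[OF P.g_diff[OF p]])
      have ch: "cpd a' (h b c) p = ?D * ?g b c p + P.phi p * cpd a' (?g b c) p"
        unfolding cpd_def h_def by (rule pdv_has) (use DERIV_mult[OF dphi dg[unfolded cpd_def]] in \<open>simp add: mult.commute\<close>)
      have s1: "(\<Sum>d\<in>UNIV. \<Gamma> d a' b p * h d c p) = P.phi p * (\<Sum>d\<in>UNIV. \<Gamma> d a' b p * ?g d c p)"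
        unfolding h_def by (simp add: sum_distrib_left mult.left_commute)
      have s2: "(\<Sum>d\<in>UNIV. \<Gamma> d a' c p * h b d p) = P.phi p * (\<Sum>d\<in>UNIV. \<Gamma> d a' c p * ?g b d p)"
        unfolding h_def by (simp add: sum_distrib_left mult.left_commute)
      have gw: "nabla2 \<Gamma> ?g a' b c p = - 2 * ?om a' p * ?g b c p"
        using weyl p unfolding weyl_connection_def by blast
      have "nabla2 \<Gamma> h a' b c p = ?D * ?g b c p + P.phi p * nabla2 \<Gamma> ?g a' b c p"
        unfolding nabla2_def ch s1 s2 by (simp add: algebra_simps)
      also have "\<dots> = - 2 * w a' p * h b c p"
        unfolding gw w_def h_def theta[OF p] by (simp add: algebra_simps)
      finally show "nabla2 \<Gamma> h a' b c p = - 2 * w a' p * h b c p" .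
    qed
  qed
  have uniq: "\<exists>c>0. \<forall>i j. \<forall>p\<in>U. h2 i j p = c * h1 i j p"
    if c1: "conformal_on U ?g h1" and n1: "\<forall>p\<in>U. (\<forall>a' b c. nabla2 \<Gamma> h1 a' b c p = - 2 * w1 a' p * h1 b c p) \<and>
                    (\<forall>e d c a' b. nabla13 \<Gamma> (curv \<Gamma>) e d c a' b p = - 3 * w1 e p * curv \<Gamma> d c a' b p)"
      and c2: "conformal_on U ?g h2" and n2: "\<forall>p\<in>U. (\<forall>a' b c. nabla2 \<Gamma> h2 a' b c p = - 2 * w2 a' p * h2 b c p) \<and>
                    (\<forall>e d c a' b. nabla13 \<Gamma> (curv \<Gamma>) e d c a' b p = - 3 * w2 e p * curv \<Gamma> d c a' b p)"
    for h1 w1 h2 w2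
  proof -
    obtain \<phi>1 where p1: "smooth_on U \<phi>1" "\<forall>p\<in>U. \<phi>1 p > 0" "\<forall>i j. \<forall>p\<in>U. h1 i j p = \<phi>1 p * ?g i j p"
      using c1 unfolding conformal_on_def by blast
    obtain \<phi>2 where p2: "smooth_on U \<phi>2" "\<forall>p\<in>U. \<phi>2 p > 0" "\<forall>i j. \<forall>p\<in>U. h2 i j p = \<phi>2 p * ?g i j p"
      using c2 unfolding conformal_on_def by blast
    have ww: "w1 e p = w2 e p" if p: "p \<in> U" for e p
    proof -
      have "- 3 * w1 e p * curv \<Gamma> iu iu ixn iu p = - 3 * w2 e p * curv \<Gamma> iu iu ixn iu p"
        using n1 n2 p by metis
      thus ?thesis using R0nz[OF p] by simp
    qed
    have cd1: "cpd k \<phi>1 z = \<phi>1 z * (2 * ?om k z - 2 * w1 k z)" if z: "z \<in> U" for z k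
      using P.conf_cpd[OF p1(1) p1(3) z] n1 z by blast
    have cd2: "cpd k \<phi>2 z = \<phi>2 z * (2 * ?om k z - 2 * w1 k z)" if z: "z \<in> U" for z k
      using P.conf_cpd[OF p2(1) p2(3) z] n2 z ww[OF z] by metis
    have D: "\<forall>z\<in>U. \<forall>k. ((\<lambda>t. \<phi>2 (z + t *\<^sub>R axis k 1) / \<phi>1 (z + t *\<^sub>R axis k 1)) has_real_derivative 0) (at 0)"
    proof (intro ballI allI)
      fix z k assume z: "z \<in> U"
      have "dn 0 U \<phi>1" using p1(1) unfolding smooth_dn by blast
      hence "(\<lambda>t. \<phi>1 (z + t *\<^sub>R axis k 1)) differentiable at 0" unfolding dn0 using axis_Basis z by blast
      hence d1: "((\<lambda>t. \<phi>1 (z + t *\<^sub>R axis k 1)) has_real_derivative cpd k \<phi>1 z) (at 0)"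
        unfolding cpd_def by (rule pdv_diff)
      have "dn 0 U \<phi>2" using p2(1) unfolding smooth_dn by blast
      hence "(\<lambda>t. \<phi>2 (z + t *\<^sub>R axis k 1)) differentiable at 0" unfolding dn0 using axis_Basis z by blast
      hence d2: "((\<lambda>t. \<phi>2 (z + t *\<^sub>R axis k 1)) has_real_derivative cpd k \<phi>2 z) (at 0)"
        unfolding cpd_def by (rule pdv_diff)
      have "\<phi>1 (z + 0 *\<^sub>R axis k 1) \<noteq> 0" using p1(2) z by fastforce
      from DERIV_divide[OF d2 d1 this]
      show "((\<lambda>t. \<phi>2 (z + t *\<^sub>R axis k 1) / \<phi>1 (z + t *\<^sub>R axis k 1)) has_real_derivative 0) (at 0)"
        unfolding cd1[OF z] cd2[OF z] by (simp add: algebra_simps)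
    qed
    have cst: "\<forall>x\<in>U. \<forall>y\<in>U. \<phi>2 x / \<phi>1 x = \<phi>2 y / \<phi>1 y"
      using const_connected[OF U_open U_conn, of "\<lambda>q. \<phi>2 q / \<phi>1 q"] D by blast
    show ?thesis
    proof (cases "U = {}")
      case True thus ?thesis by (intro exI[of _ 1]) simp
    next
      case False
      then obtain p0 where p0: "p0 \<in> U" by blast
      show ?thesis
      proof (intro exI[of _ "\<phi>2 p0 / \<phi>1 p0"] conjI allI ballI)
        show "0 < \<phi>2 p0 / \<phi>1 p0" using p1(2) p2(2) p0 by simp
        fix i j p assume p: "p \<in> U"
        have "\<phi>2 p = \<phi>2 p0 / \<phi>1 p0 * \<phi>1 p" using cst p p0 p1(2) by (metis divide_eq_eq less_irrefl)
        thus "h2 i j p = \<phi>2 p0 / \<phi>1 p0 * h1 i j p" using p1(3) p2(3) p by simp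
      qed
    qed
  qed
  show ?thesis
  proof (rule conjI)
    show "\<exists>h w. conformal_on U ?g h \<and> (\<forall>k. smooth_on U (w k)) \<and>
            (\<forall>p\<in>U. (\<forall>a' b c. nabla2 \<Gamma> h a' b c p = - 2 * w a' p * h b c p) \<and>
                    (\<forall>e d c a' b. nabla13 \<Gamma> (curv \<Gamma>) e d c a' b p = - 3 * w e p * curv \<Gamma> d c a' b p))"
      by (rule exist)
  next
    show "\<forall>h1 w1 h2 w2.
            conformal_on U ?g h1 \<and> (\<forall>k. smooth_on U (w1 k)) \<and>
            (\<forall>p\<in>U. (\<forall>a' b c. nabla2 \<Gamma> h1 a' b c p = - 2 * w1 a' p * h1 b c p) \<and>
                    (\<forall>e d c a' b. nabla13 \<Gamma> (curv \<Gamma>) e d c a' b p = - 3 * w1 e p * curv \<Gamma> d c a' b p)) \<and>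
            conformal_on U ?g h2 \<and> (\<forall>k. smooth_on U (w2 k)) \<and>
            (\<forall>p\<in>U. (\<forall>a' b c. nabla2 \<Gamma> h2 a' b c p = - 2 * w2 a' p * h2 b c p) \<and>
                    (\<forall>e d c a' b. nabla13 \<Gamma> (curv \<Gamma>) e d c a' b p = - 3 * w2 e p * curv \<Gamma> d c a' b p))
            \<longrightarrow> (\<exists>c>0. \<forall>i j. \<forall>p\<in>U. h2 i j p = c * h1 i j p)"
    proof (intro allI impI)
      fix h1 w1 h2 w2
      assume H: "conformal_on U ?g h1 \<and> (\<forall>k. smooth_on U (w1 k)) \<and>
            (\<forall>p\<in>U. (\<forall>a' b c. nabla2 \<Gamma> h1 a' b c p = - 2 * w1 a' p * h1 b c p) \<and>
                    (\<forall>e d c a' b. nabla13 \<Gamma> (curv \<Gamma>) e d c a' b p = - 3 * w1 e p * curv \<Gamma> d c a' b p)) \<and>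
            conformal_on U ?g h2 \<and> (\<forall>k. smooth_on U (w2 k)) \<and>
            (\<forall>p\<in>U. (\<forall>a' b c. nabla2 \<Gamma> h2 a' b c p = - 2 * w2 a' p * h2 b c p) \<and>
                    (\<forall>e d c a' b. nabla13 \<Gamma> (curv \<Gamma>) e d c a' b p = - 3 * w2 e p * curv \<Gamma> d c a' b p))"
      show "\<exists>c>0. \<forall>i j. \<forall>p\<in>U. h2 i j p = c * h1 i j p"
        by (rule uniq[of h1 w1 h2 w2]) (use H in blast)+
    qed
  qed
qed

end
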